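(* Let $\mathcal L$ be an MV-algebra and let $P\subsetneq Q$ be prime implication filters. For all $\mathcal F,\mathcal G\in\mathrm{PSpec}(P)$, $$q_Q(\mathcal F^+)=\lnot\, q_Q(\mathcal F)\quad\text{and}\quad q_Q(\mathcal F\sqsubseteq\!\!\to\mathcal G)=q_Q(\mathcal F)\to q_Q(\mathcal G),$$ where $\lnot$ and $\to$ on the right are the operations of $\mathcal L/Q$. Thus $\mathcal F\mapsto q_Q(\mathcal F)$ induces an MV-morphism $\hat\eta_{PQ}\colon\hat{\mathcal L}_P\to\mathcal L/Q$.
   Context: $\mathcal L=(L,\oplus,\lnot,0)$ is an MV-algebra. We write $1=\lnot0$, $x\otimes y=\lnot(\lnot x\oplus\lnot y)$, and $x\to y=\lnot x\oplus y$. An implication filter is a set $P\ni1$ closed under modus ponens. $\mathcal L/P$ is the quotient by $x\sim_P y\iff x\to y,\ y\to x\in P$, with cosets $[x]_P$. $P$ is prime if $\mathcal L/P$ is linearly ordered. A lattice filter is a nonempty upward-closed subset closed under $\wedge$; it is prime if it is proper and $a\vee b\in\mathcal F$ implies $a\in\mathcal F$ or $b\in\mathcal F$. For upward-closed $\mathcal F$ and $a\in L$, let $\mathcal F_a=\{z:z\to a\notin\mathcal F\}$, $\mathcal F^+=\mathcal F_0$, and $\mathcal K(\mathcal F)=\{z:\forall a\notin\mathcal F,\ z\to a\notin\mathcal F\}$. $\mathrm{PSpec}(P)$ is the set of prime lattice filters with kernel $P$. For $\mathcal F\subseteq\mathcal G$ we put $\mathcal F\sqsubseteq\!\!\to\mathcal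 G=\bigcap_{a\notin\mathcal G}\mathcal F_a$, and in general $\mathcal F\sqsubseteq\!\!\to\mathcal G:=(\mathcal F\cap\mathcal G)\sqsubseteq\!\!\to\mathcal G$. For a prime lattice filter $\mathcal F$ and a prime implication filter $Q$ properly containing $\mathcal K(\mathcal F)$, $q_Q(\mathcal F)$ denotes the unique $Q$-coset $C$ with $C\cap\mathcal F\ne\emptyset\ne C\setminus\mathcal F$. $\hat{\mathcal L}_P$ is $\mathrm{PSpec}(P)$ modulo the relation $\mathcal F\equiv\mathcal G\iff\mathcal F\sqsubseteq\!\!\to\mathcal G=\mathcal G\sqsubseteq\!\!\to\mathcal F=P$, with operations ${}^+$ and $\sqsubseteq\!\!\to$. *)

theory Defs
  imports Main
begin

record 'a mv =
  mv_car  :: "'a set"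
  mv_plus :: "'a \<Rightarrow> 'a \<Rightarrow> 'a"
  mv_neg  :: "'a \<Rightarrow> 'a"
  mv_zero :: "'a"

definition mv_one :: "'a mv \<Rightarrow> 'a" where
  "mv_one A = mv_neg A (mv_zero A)"

definition mv_imp :: "'a mv \<Rightarrow> 'a \<Rightarrow> 'a \<Rightarrow> 'a" where
  "mv_imp A x y = mv_plus A (mv_neg A x) y"

definition mv_times :: "'a mv \<Rightarrow> 'a \<Rightarrow> 'a \<Rightarrow> 'a" where
  "mv_times A x y = mv_neg A (mv_plus A (mv_neg A x) (mv_neg A y))"

definition mv_algebra :: "'a mv \<Rightarrow> bool" where
  "mv_algebra A \<longleftrightarrow>
     mv_zero A \<in> mv_car A \<and>
     (\<forall>x\<in>mv_car A. mv_neg A x \<in> mv_car A) \<and>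
     (\<forall>x\<in>mv_car A. \<forall>y\<in>mv_car A. mv_plus A x y \<in> mv_car A) \<and>
     (\<forall>x\<in>mv_car A. \<forall>y\<in>mv_car A. \<forall>z\<in>mv_car A.
        mv_plus A x (mv_plus A y z) = mv_plus A (mv_plus A x y) z) \<and>
     (\<forall>x\<in>mv_car A. \<forall>y\<in>mv_car A. mv_plus A x y = mv_plus A y x) \<and>
     (\<forall>x\<in>mv_car A. mv_plus A x (mv_zero A) = x) \<and>
     (\<forall>x\<in>mv_car A. mv_neg A (mv_neg A x) = x) \<and>
     (\<forall>x\<in>mv_car A. mv_plus A x (mv_neg A (mv_zero A)) = mv_neg A (mv_zero A)) \<and>
     (\<forall>x\<in>mv_car A. \<forall>y\<in>mv_car A.
        mv_plus A (mv_neg A (mv_plus A (mv_neg A x) y)) y =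
        mv_plus A (mv_neg A (mv_plus A (mv_neg A y) x)) x)"

definition mv_le :: "'a mv \<Rightarrow> 'a \<Rightarrow> 'a \<Rightarrow> bool" where
  "mv_le A x y \<longleftrightarrow> mv_imp A x y = mv_one A"

definition mv_sup :: "'a mv \<Rightarrow> 'a \<Rightarrow> 'a \<Rightarrow> 'a" where
  "mv_sup A x y = mv_plus A (mv_neg A (mv_plus A (mv_neg A x) y)) y"

definition mv_inf :: "'a mv \<Rightarrow> 'a \<Rightarrow> 'a \<Rightarrow> 'a" where
  "mv_inf A x y = mv_neg A (mv_sup A (mv_neg A x) (mv_neg A y))"

definition impl_filter :: "'a mv \<Rightarrow> 'a set \<Rightarrow> bool" where
  "impl_filter A P \<longleftrightarrow> P \<subseteq> mv_car A \<and> mv_one A \<in> P \<and>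
     (\<forall>x\<in>mv_car A. \<forall>y\<in>mv_car A. x \<in> P \<and> mv_imp A x y \<in> P \<longrightarrow> y \<in> P)"

definition mv_coset :: "'a mv \<Rightarrow> 'a set \<Rightarrow> 'a \<Rightarrow> 'a set" where
  "mv_coset A P x = {y\<in>mv_car A. mv_imp A x y \<in> P \<and> mv_imp A y x \<in> P}"

definition mv_quot :: "'a mv \<Rightarrow> 'a set \<Rightarrow> 'a set set" where
  "mv_quot A P = mv_coset A P ` mv_car A"

text \<open>Quotient operations: negation and implication of cosets, computed on
  representatives (they are well defined since \<sim>_P is a congruence).\<close>
definition quot_neg :: "'a mv \<Rightarrow> 'a set \<Rightarrow> 'a set \<Rightarrow> 'a set" where
  "quot_neg A P C = (\<Union>x\<in>C. mv_coset A P (mv_neg A x))"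

definition quot_imp :: "'a mv \<Rightarrow> 'a set \<Rightarrow> 'a set \<Rightarrow> 'a set \<Rightarrow> 'a set" where
  "quot_imp A P C D = (\<Union>x\<in>C. \<Union>y\<in>D. mv_coset A P (mv_imp A x y))"

text \<open>P is prime iff L/P is linearly ordered (order of the quotient MV-algebra:
  C \<le> D iff C \<rightarrow> D = [1]).\<close>
definition prime_impl_filter :: "'a mv \<Rightarrow> 'a set \<Rightarrow> bool" where
  "prime_impl_filter A P \<longleftrightarrow> impl_filter A P \<and>
     (\<forall>C\<in>mv_quot A P. \<forall>D\<in>mv_quot A P.
        quot_imp A P C D = mv_coset A P (mv_one A) \<or>
        quot_imp A P D C = mv_coset A P (mv_one A))"

definition up_closed :: "'a mv \<Rightarrow> 'a set \<Rightarrow> bool" where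
  "up_closed A F \<longleftrightarrow> F \<subseteq> mv_car A \<and>
     (\<forall>x\<in>F. \<forall>y\<in>mv_car A. mv_le A x y \<longrightarrow> y \<in> F)"

definition lattice_filter :: "'a mv \<Rightarrow> 'a set \<Rightarrow> bool" where
  "lattice_filter A F \<longleftrightarrow> F \<noteq> {} \<and> up_closed A F \<and>
     (\<forall>x\<in>F. \<forall>y\<in>F. mv_inf A x y \<in> F)"

definition prime_lattice_filter :: "'a mv \<Rightarrow> 'a set \<Rightarrow> bool" where
  "prime_lattice_filter A F \<longleftrightarrow> lattice_filter A F \<and> F \<noteq> mv_car A \<and>
     (\<forall>a\<in>mv_car A. \<forall>b\<in>mv_car A. mv_sup A a b \<in> F \<longrightarrow> a \<in> F \<or> b \<in> F)"

definition fsub :: "'a mv \<Rightarrow> 'a set \<Rightarrow> 'a \<Rightarrow> 'a set" where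
  "fsub A F a = {z\<in>mv_car A. mv_imp A z a \<notin> F}"

definition fplus :: "'a mv \<Rightarrow> 'a set \<Rightarrow> 'a set" where
  "fplus A F = fsub A F (mv_zero A)"

definition kernel :: "'a mv \<Rightarrow> 'a set \<Rightarrow> 'a set" where
  "kernel A F = {z\<in>mv_car A. \<forall>a\<in>mv_car A - F. mv_imp A z a \<notin> F}"

definition PSpec :: "'a mv \<Rightarrow> 'a set \<Rightarrow> 'a set set" where
  "PSpec A P = {F. prime_lattice_filter A F \<and> kernel A F = P}"

text \<open>F \<sqsubseteq>\<rightarrow> G = (F \<inter> G) \<sqsubseteq>\<rightarrow> G = \<Inter>_{a \<notin> G} (F \<inter> G)_a
  (the empty intersection being the whole carrier).\<close>
definition fimp :: "'a mv \<Rightarrow> 'a set \<Rightarrow> 'a set \<Rightarrow> 'a set" where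
  "fimp A F G = {z\<in>mv_car A. \<forall>a\<in>mv_car A - G. z \<in> fsub A (F \<inter> G) a}"

definition qQ :: "'a mv \<Rightarrow> 'a set \<Rightarrow> 'a set \<Rightarrow> 'a set" where
  "qQ A Q F = (THE C. C \<in> mv_quot A Q \<and> C \<inter> F \<noteq> {} \<and> C - F \<noteq> {})"

text \<open>The equivalence on PSpec(P) defining \<^emph>\<open>hat L_P\<close>.\<close>
definition pspec_equiv :: "'a mv \<Rightarrow> 'a set \<Rightarrow> 'a set \<Rightarrow> 'a set \<Rightarrow> bool" where
  "pspec_equiv A P F G \<longleftrightarrow> fimp A F G = P \<and> fimp A G F = P"

end

theory Submission
  imports Defs
begin

locale mvalg = fixes A :: "'a mv" assumes mv: "mv_algebra A"
begin
abbreviation "L \<equiv> mv_car A"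
abbreviation "pl \<equiv> mv_plus A"
abbreviation "neg \<equiv> mv_neg A"
abbreviation "zero \<equiv> mv_zero A"
abbreviation "one \<equiv> mv_one A"
abbreviation "imp \<equiv> mv_imp A"
abbreviation "le \<equiv> mv_le A"

lemma zero_c[simp]: "zero \<in> L" using mv unfolding mv_algebra_def by blast
lemma neg_c[simp]: "x \<in> L \<Longrightarrow> neg x \<in> L" using mv unfolding mv_algebra_def by blast
lemma pl_c[simp]: "x \<in> L \<Longrightarrow> y \<in> L \<Longrightarrow> pl x y \<in> L" using mv unfolding mv_algebra_def by blast
lemma one_c[simp]: "one \<in> L" unfolding mv_one_def by simp
lemma imp_c[simp]: "x \<in> L \<Longrightarrow> y \<in> L \<Longrightarrow> imp x y \<in> L" unfolding mv_imp_def by simp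
lemma sup_c[simp]: "x \<in> L \<Longrightarrow> y \<in> L \<Longrightarrow> mv_sup A x y \<in> L" unfolding mv_sup_def by simp

lemma assoc: "x \<in> L \<Longrightarrow> y \<in> L \<Longrightarrow> z \<in> L \<Longrightarrow> pl (pl x y) z = pl x (pl y z)"
  using mv unfolding mv_algebra_def by metis
lemma comm: "x \<in> L \<Longrightarrow> y \<in> L \<Longrightarrow> pl x y = pl y x"
  using mv unfolding mv_algebra_def by metis
lemma lcomm: "x \<in> L \<Longrightarrow> y \<in> L \<Longrightarrow> z \<in> L \<Longrightarrow> pl x (pl y z) = pl y (pl x z)"
  by (metis assoc comm)
lemmas ac = assoc comm lcomm

lemma pl_zero[simp]: "x \<in> L \<Longrightarrow> pl x zero = x" using mv unfolding mv_algebra_def by metis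
lemma zero_pl[simp]: "x \<in> L \<Longrightarrow> pl zero x = x" by (metis pl_zero comm zero_c)
lemma neg_neg[simp]: "x \<in> L \<Longrightarrow> neg (neg x) = x" using mv unfolding mv_algebra_def by metis
lemma pl_one[simp]: "x \<in> L \<Longrightarrow> pl x one = one" using mv unfolding mv_algebra_def mv_one_def by metis
lemma one_pl[simp]: "x \<in> L \<Longrightarrow> pl one x = one" by (metis pl_one comm one_c)
lemma neg_one[simp]: "neg one = zero" unfolding mv_one_def by simp
lemma mv6: "x \<in> L \<Longrightarrow> y \<in> L \<Longrightarrow> pl (neg (pl (neg x) y)) y = pl (neg (pl (neg y) x)) x"
  using mv unfolding mv_algebra_def by metis

lemma neg_pl_self[simp]: "x \<in> L \<Longrightarrow> pl (neg x) x = one"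
  using mv6[of x one] by simp
lemma pl_neg_self[simp]: "x \<in> L \<Longrightarrow> pl x (neg x) = one"
  by (metis comm neg_c neg_pl_self)
lemma neg_pl_self2[simp]: "x \<in> L \<Longrightarrow> w \<in> L \<Longrightarrow> pl (neg x) (pl x w) = one"
  by (metis assoc neg_c neg_pl_self one_pl)
lemma pl_neg_self2[simp]: "x \<in> L \<Longrightarrow> w \<in> L \<Longrightarrow> pl x (pl (neg x) w) = one"
  by (metis assoc neg_c pl_neg_self one_pl)

lemma le_iff: "le x y \<longleftrightarrow> pl (neg x) y = one" unfolding mv_le_def mv_imp_def ..
lemma imp_one[simp]: "x \<in> L \<Longrightarrow> imp x one = one" unfolding mv_imp_def by simp
lemma one_imp[simp]: "x \<in> L \<Longrightarrow> imp one x = x" unfolding mv_imp_def by simp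
lemma imp_self[simp]: "x \<in> L \<Longrightarrow> imp x x = one" unfolding mv_imp_def by simp

lemma le_pl: "x \<in> L \<Longrightarrow> w \<in> L \<Longrightarrow> le x (pl x w)" unfolding le_iff by simp
lemma le_ex: assumes "x \<in> L" "y \<in> L" "le x y" shows "\<exists>z\<in>L. y = pl x z"
proof -
  have "pl (neg (pl (neg x) y)) y = y" using assms by (simp add: le_iff)
  hence "y = pl (neg (pl (neg y) x)) x" using mv6 assms by metis
  thus ?thesis using assms by (metis comm neg_c pl_c)
qed
lemma le_trans: assumes "x \<in> L" "y \<in> L" "z \<in> L" "le x y" "le y z" shows "le x z"
proof -
  obtain u where u: "u \<in> L" "y = pl x u" using le_ex assms by blast
  obtain v where v: "v \<in> L" "z = pl y v" using le_ex assms by blast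
  have "z = pl x (pl u v)" using u v assms by (simp add: assoc)
  thus ?thesis using le_pl assms u v by simp
qed
lemma le_mono: assumes "x \<in> L" "y \<in> L" "w \<in> L" "le x y" shows "le (pl w x) (pl w y)"
proof -
  obtain u where u: "u \<in> L" "y = pl x u" using le_ex assms by blast
  have "pl w y = pl (pl w x) u" using u assms by (simp add: assoc)
  thus ?thesis using le_pl assms u by simp
qed
lemma le_neg: assumes "x \<in> L" "y \<in> L" "le x y" shows "le (neg y) (neg x)"
  using assms unfolding le_iff by (simp add: comm)
lemma imp_anti: assumes "x \<in> L" "y \<in> L" "w \<in> L" "le x y" shows "le (imp y w) (imp x w)"
  using le_mono[OF neg_c neg_c assms(3) le_neg[OF assms(1,2,4)]] assms
  unfolding mv_imp_def by (simp add: comm)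
lemma sup_ge2: "x \<in> L \<Longrightarrow> y \<in> L \<Longrightarrow> le y (mv_sup A x y)"
  unfolding mv_sup_def by (metis comm le_pl neg_c pl_c)
lemma sup_comm: "x \<in> L \<Longrightarrow> y \<in> L \<Longrightarrow> mv_sup A x y = mv_sup A y x"
  unfolding mv_sup_def by (rule mv6)
lemma sup_ge1: "x \<in> L \<Longrightarrow> y \<in> L \<Longrightarrow> le x (mv_sup A x y)"
  by (metis sup_comm sup_ge2)
lemma imp_imp: "imp (imp x y) y = mv_sup A x y" unfolding mv_sup_def mv_imp_def ..

lemma T: assumes "a \<in> L" "b \<in> L" "c \<in> L" shows "le (imp a b) (imp (imp b c) (imp a c))"
proof -
  define m where "m = neg (pl (neg a) (neg (imp a b)))"
  have mL: "m \<in> L" using assms by (simp add: m_def)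
  have "le m b" using assms unfolding m_def le_iff mv_imp_def
    by (simp add: ac) (metis assoc neg_c pl_c pl_neg_self)
  hence "le (imp b c) (imp m c)" using imp_anti mL assms by blast
  thus ?thesis using assms unfolding m_def le_iff mv_imp_def by (simp add: ac)
qed
lemma T2: assumes "u \<in> L" "v \<in> L" "w \<in> L" shows "le (imp u v) (imp (imp w u) (imp w v))"
  using T[OF assms(3,1,2)] assms unfolding le_iff mv_imp_def by (simp add: ac)
end

context mvalg begin

lemma if_sub: "impl_filter A Q \<Longrightarrow> Q \<subseteq> L" unfolding impl_filter_def by (elim conjE)
lemma if_one: "impl_filter A Q \<Longrightarrow> one \<in> Q" unfolding impl_filter_def by (elim conjE)
lemma if_mp: assumes "impl_filter A Q" "x \<in> Q" "imp x y \<in> Q" "x \<in> L" "y \<in> L" shows "y \<in> Q"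
proof -
  have "\<forall>x\<in>L. \<forall>y\<in>L. x \<in> Q \<and> imp x y \<in> Q \<longrightarrow> y \<in> Q" using assms(1) unfolding impl_filter_def by (elim conjE)
  thus ?thesis using assms(2-5) by blast
qed
lemma if_up: assumes "impl_filter A Q" "x \<in> Q" "y \<in> L" "le x y" shows "y \<in> Q"
proof -
  have "imp x y = one" using assms(4) unfolding mv_le_def .
  hence "imp x y \<in> Q" using if_one[OF assms(1)] by simp
  thus ?thesis using if_mp[OF assms(1,2)] if_sub[OF assms(1)] assms(2,3) by blast
qed
lemma if_trans: assumes "impl_filter A Q" "x \<in> L" "y \<in> L" "z \<in> L" "imp x y \<in> Q" "imp y z \<in> Q"
  shows "imp x z \<in> Q"
proof -
  have "imp (imp y z) (imp x z) \<in> Q" using if_up[OF assms(1,5) _ T[OF assms(2-4)]] assms(2-4) by simp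
  thus ?thesis by (rule if_mp[OF assms(1,6)]) (simp_all add: assms(2-4))
qed
lemma coset_iff: "y \<in> mv_coset A Q x \<longleftrightarrow> y \<in> L \<and> imp x y \<in> Q \<and> imp y x \<in> Q"
  unfolding mv_coset_def by simp
lemma coset_refl: "impl_filter A Q \<Longrightarrow> x \<in> L \<Longrightarrow> x \<in> mv_coset A Q x"
  using coset_iff if_one by simp
lemma coset_eq: assumes "impl_filter A Q" "x \<in> L" "y \<in> L" "imp x y \<in> Q" "imp y x \<in> Q"
  shows "mv_coset A Q x = mv_coset A Q y"
proof (intro set_eqI iffI)
  fix z assume "z \<in> mv_coset A Q x"
  hence z: "z \<in> L" "imp x z \<in> Q" "imp z x \<in> Q" using coset_iff by auto
  show "z \<in> mv_coset A Q y" unfolding coset_iff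
    using z if_trans[of Q y x z] if_trans[of Q z x y] assms by blast
next
  fix z assume "z \<in> mv_coset A Q y"
  hence z: "z \<in> L" "imp y z \<in> Q" "imp z y \<in> Q" using coset_iff by auto
  show "z \<in> mv_coset A Q x" unfolding coset_iff
    using z if_trans[of Q x y z] if_trans[of Q z y x] assms by blast
qed
lemma coset_eq': "impl_filter A Q \<Longrightarrow> x \<in> L \<Longrightarrow> y \<in> mv_coset A Q x \<Longrightarrow> mv_coset A Q y = mv_coset A Q x"
proof -
  assume a: "impl_filter A Q" "x \<in> L" "y \<in> mv_coset A Q x"
  hence "y \<in> L" "imp x y \<in> Q" "imp y x \<in> Q" unfolding coset_iff by auto
  thus ?thesis using coset_eq[of Q x y] a by simp
qed
lemma neg_imp: "x \<in> L \<Longrightarrow> y \<in> L \<Longrightarrow> imp (neg y) (neg x) = imp x y"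
  unfolding mv_imp_def by (simp add: comm)
lemma pl_cong: assumes "impl_filter A Q" "u \<in> L" "u' \<in> L" "z \<in> L" "imp u u' \<in> Q"
  shows "imp (pl u z) (pl u' z) \<in> Q"
proof -
  have "le (neg u) (mv_sup A (neg u) z)" using sup_ge1[of "neg u" z] assms by simp
  hence "le (pl u' (neg u)) (pl u' (mv_sup A (neg u) z))" using le_mono[of "neg u" _ u'] assms by simp
  moreover have "pl u' (neg u) = imp u u'" unfolding mv_imp_def using assms comm by simp
  moreover have "mv_sup A (neg u) z = pl (neg (pl u z)) z" unfolding mv_sup_def using assms by simp
  moreover have "pl u' (pl (neg (pl u z)) z) = pl (neg (pl u z)) (pl u' z)"
    using assms lcomm[of u' "neg (pl u z)" z] comm[of u' z] by simp
  ultimately have "le (imp u u') (imp (pl u z) (pl u' z))" unfolding mv_imp_def by simp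
  thus ?thesis by (rule if_up[OF assms(1,5), rotated]) (simp add: assms)
qed
lemma imp_cong1: assumes "impl_filter A Q" "x \<in> L" "x' \<in> L" "y \<in> L" "y' \<in> L"
  "imp x' x \<in> Q" "imp y y' \<in> Q" shows "imp (imp x y) (imp x' y') \<in> Q"
proof -
  have 1: "imp (pl (neg x) y) (pl (neg x') y) \<in> Q"
    using pl_cong[of Q "neg x" "neg x'" y] assms neg_imp[of x' x] by simp
  have "imp (pl y (neg x')) (pl y' (neg x')) \<in> Q" using pl_cong[of Q y y' "neg x'"] assms by simp
  moreover have "pl y (neg x') = pl (neg x') y" "pl y' (neg x') = pl (neg x') y'"
    using assms comm by auto
  ultimately have 2: "imp (pl (neg x') y) (pl (neg x') y') \<in> Q" by simp
  have "imp (pl (neg x) y) (pl (neg x') y') \<in> Q" using if_trans[OF assms(1) _ _ _ 1 2] assms by simp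
  thus ?thesis unfolding mv_imp_def .
qed
lemma coset_imp_rel: assumes "impl_filter A Q" "x' \<in> mv_coset A Q x" "y' \<in> mv_coset A Q y" "x \<in> L" "y \<in> L"
  shows "imp x' y' \<in> mv_coset A Q (imp x y)"
proof -
  have h: "x' \<in> L" "imp x x' \<in> Q" "imp x' x \<in> Q" "y' \<in> L" "imp y y' \<in> Q" "imp y' y \<in> Q"
    using assms(2,3) unfolding coset_iff by auto
  show ?thesis unfolding coset_iff
    using imp_cong1[OF assms(1) assms(4) h(1) assms(5) h(4) h(3) h(5)]
      imp_cong1[OF assms(1) h(1) assms(4) h(4) assms(5) h(2) h(6)] h assms by simp
qed
lemma coset_neg_rel: assumes "impl_filter A Q" "x' \<in> mv_coset A Q x" "x \<in> L"
  shows "neg x' \<in> mv_coset A Q (neg x)"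
proof -
  have h: "x' \<in> L" "imp x x' \<in> Q" "imp x' x \<in> Q" using assms(2) unfolding coset_iff by auto
  have "imp (neg x) (neg x') = imp x' x" "imp (neg x') (neg x) = imp x x'"
    using neg_imp h assms by auto
  thus ?thesis unfolding coset_iff using h assms by simp
qed
lemma UN_const: "a \<in> C \<Longrightarrow> (\<And>x. x \<in> C \<Longrightarrow> f x = c) \<Longrightarrow> (\<Union>x\<in>C. f x) = c"
  by auto
lemma quot_imp_coset: assumes "impl_filter A Q" "x \<in> L" "y \<in> L"
  shows "quot_imp A Q (mv_coset A Q x) (mv_coset A Q y) = mv_coset A Q (imp x y)"
proof -
  have eq: "mv_coset A Q (imp x' y') = mv_coset A Q (imp x y)" if "x' \<in> mv_coset A Q x" "y' \<in> mv_coset A Q y" for x' y'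
    using coset_eq'[OF assms(1) _ coset_imp_rel[OF assms(1) that assms(2,3)]] assms by simp
  have xin: "x \<in> mv_coset A Q x" and yin: "y \<in> mv_coset A Q y" using coset_refl assms by auto
  show ?thesis unfolding quot_imp_def
  proof (rule UN_const[OF xin])
    fix x' assume x': "x' \<in> mv_coset A Q x"
    show "(\<Union>y'\<in>mv_coset A Q y. mv_coset A Q (imp x' y')) = mv_coset A Q (imp x y)"
      by (rule UN_const[OF yin]) (rule eq[OF x'])
  qed
qed
lemma quot_neg_coset: assumes "impl_filter A Q" "x \<in> L"
  shows "quot_neg A Q (mv_coset A Q x) = mv_coset A Q (neg x)"
proof -
  have eq: "mv_coset A Q (neg x') = mv_coset A Q (neg x)" if "x' \<in> mv_coset A Q x" for x'
    using coset_eq'[OF assms(1) _ coset_neg_rel[OF assms(1) that assms(2)]] assms by simp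
  have xin: "x \<in> mv_coset A Q x" using coset_refl assms by auto
  show ?thesis unfolding quot_neg_def by (rule UN_const[OF xin]) (rule eq)
qed
lemma coset_one: "impl_filter A Q \<Longrightarrow> z \<in> mv_coset A Q one \<longleftrightarrow> z \<in> Q"
proof -
  assume f: "impl_filter A Q"
  show ?thesis unfolding coset_iff using if_one[OF f] if_sub[OF f] by auto
qed
lemma prime_lin: assumes "prime_impl_filter A Q" "x \<in> L" "y \<in> L"
  shows "imp x y \<in> Q \<or> imp y x \<in> Q"
proof -
  have f: "impl_filter A Q" using assms(1) unfolding prime_impl_filter_def by (elim conjE)
  have all: "\<forall>C\<in>mv_quot A Q. \<forall>D\<in>mv_quot A Q.
        quot_imp A Q C D = mv_coset A Q one \<or> quot_imp A Q D C = mv_coset A Q one"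
    using assms(1) unfolding prime_impl_filter_def by (elim conjE)
  have "mv_coset A Q x \<in> mv_quot A Q" "mv_coset A Q y \<in> mv_quot A Q"
    unfolding mv_quot_def using assms by auto
  hence "quot_imp A Q (mv_coset A Q x) (mv_coset A Q y) = mv_coset A Q one \<or>
        quot_imp A Q (mv_coset A Q y) (mv_coset A Q x) = mv_coset A Q one"
    using all by blast
  hence "mv_coset A Q (imp x y) = mv_coset A Q one \<or> mv_coset A Q (imp y x) = mv_coset A Q one"
    using quot_imp_coset f assms by simp
  moreover have "imp x y \<in> mv_coset A Q (imp x y)" "imp y x \<in> mv_coset A Q (imp y x)"
    using coset_refl[OF f] assms by auto
  ultimately show ?thesis using coset_one[OF f] by blast
qed
end

context mvalg begin

definition sat :: "'a set \<Rightarrow> 'a set \<Rightarrow> bool" where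
  "sat P X \<longleftrightarrow> X \<subseteq> L \<and> (\<forall>x\<in>X. \<forall>y\<in>L. imp x y \<in> P \<longrightarrow> y \<in> X)"

lemma satD: "sat P X \<Longrightarrow> x \<in> X \<Longrightarrow> y \<in> L \<Longrightarrow> imp x y \<in> P \<Longrightarrow> y \<in> X"
  unfolding sat_def by blast
lemma satL: "sat P X \<Longrightarrow> x \<in> X \<Longrightarrow> x \<in> L"
  unfolding sat_def by blast
lemma sat_up: assumes "impl_filter A P" "sat P X" "x \<in> X" "y \<in> L" "le x y" shows "y \<in> X"
proof -
  have "imp x y = one" using assms(5) unfolding mv_le_def .
  hence "imp x y \<in> P" using if_one[OF assms(1)] by simp
  thus ?thesis using satD[OF assms(2,3,4)] by simp
qed
lemma sep: assumes "prime_impl_filter A P" "sat P X" "x \<in> X" "y \<in> L" "y \<notin> X"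
  shows "imp y x \<in> P"
proof -
  have "x \<in> L" using satL assms by blast
  hence "imp x y \<in> P \<or> imp y x \<in> P" using prime_lin[OF assms(1)] assms(4) by blast
  moreover have "imp x y \<notin> P" using satD[OF assms(2,3,4)] assms(5) by blast
  ultimately show ?thesis by blast
qed
lemma sat_kernel: assumes "up_closed A F" "kernel A F = P" shows "sat P F"
  unfolding sat_def
proof (intro conjI ballI impI)
  show FL: "F \<subseteq> L" using assms(1) unfolding up_closed_def by (elim conjE)
  have up: "\<forall>x\<in>F. \<forall>y\<in>L. le x y \<longrightarrow> y \<in> F" using assms(1) unfolding up_closed_def by (elim conjE)
  fix x y assume x: "x \<in> F" and y: "y \<in> L" and p: "imp x y \<in> P"
  have xL: "x \<in> L" using x FL by blast
  show "y \<in> F"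
  proof (rule ccontr)
    assume ny: "y \<notin> F"
    have "imp x y \<in> kernel A F" using p assms(2) by simp
    hence "\<forall>a\<in>L - F. imp (imp x y) a \<notin> F" unfolding kernel_def by blast
    hence "imp (imp x y) y \<notin> F" using y ny by blast
    moreover have "imp (imp x y) y \<in> F" unfolding imp_imp
      using up x sup_ge1[OF xL y] sup_c[OF xL y] by blast
    ultimately show False by blast
  qed
qed

lemma U: assumes P: "prime_impl_filter A P" and Q: "impl_filter A Q" and PQ: "P \<subseteq> Q" and X: "sat P X"
  and c: "c1 \<in> L" "c2 \<in> L"
  and x1: "x1 \<in> mv_coset A Q c1" "x1 \<in> X" and y1: "y1 \<in> mv_coset A Q c1" "y1 \<notin> X"
  and x2: "x2 \<in> mv_coset A Q c2" "x2 \<in> X" and y2: "y2 \<in> mv_coset A Q c2" "y2 \<notin> X"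
  shows "mv_coset A Q c1 = mv_coset A Q c2"
proof -
  have hx1: "x1 \<in> L" "imp c1 x1 \<in> Q" "imp x1 c1 \<in> Q" using x1(1) unfolding coset_iff by auto
  have hy1: "y1 \<in> L" "imp c1 y1 \<in> Q" "imp y1 c1 \<in> Q" using y1(1) unfolding coset_iff by auto
  have hx2: "x2 \<in> L" "imp c2 x2 \<in> Q" "imp x2 c2 \<in> Q" using x2(1) unfolding coset_iff by auto
  have hy2: "y2 \<in> L" "imp c2 y2 \<in> Q" "imp y2 c2 \<in> Q" using y2(1) unfolding coset_iff by auto
  have a1: "imp y2 x1 \<in> Q" using sep[OF P X x1(2) hy2(1) y2(2)] PQ by blast
  have a2: "imp y1 x2 \<in> Q" using sep[OF P X x2(2) hy1(1) y1(2)] PQ by blast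
  have a3: "imp x1 y1 \<in> Q" using if_trans[OF Q hx1(1) c(1) hy1(1) hx1(3) hy1(2)] .
  have a4: "imp x2 y2 \<in> Q" using if_trans[OF Q hx2(1) c(2) hy2(1) hx2(3) hy2(2)] .
  have b1: "imp y1 y2 \<in> Q" using if_trans[OF Q hy1(1) hx2(1) hy2(1) a2 a4] .
  have b2: "imp y2 y1 \<in> Q" using if_trans[OF Q hy2(1) hx1(1) hy1(1) a1 a3] .
  have "mv_coset A Q y1 = mv_coset A Q c1" using coset_eq'[OF Q c(1) y1(1)] .
  moreover have "mv_coset A Q y2 = mv_coset A Q c2" using coset_eq'[OF Q c(2) y2(1)] .
  moreover have "mv_coset A Q y1 = mv_coset A Q y2" using coset_eq[OF Q hy1(1) hy2(1) b1 b2] .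
  ultimately show ?thesis by simp
qed

lemma qQ_eq: assumes P: "prime_impl_filter A P" and Q: "impl_filter A Q" and PQ: "P \<subseteq> Q" and X: "sat P X"
  and c: "c \<in> L" and x: "x \<in> mv_coset A Q c" "x \<in> X" and y: "y \<in> mv_coset A Q c" "y \<notin> X"
  shows "qQ A Q X = mv_coset A Q c"
  unfolding qQ_def
proof (rule the_equality)
  show "mv_coset A Q c \<in> mv_quot A Q \<and> mv_coset A Q c \<inter> X \<noteq> {} \<and> mv_coset A Q c - X \<noteq> {}"
    unfolding mv_quot_def using c x y by blast
next
  fix C assume C: "C \<in> mv_quot A Q \<and> C \<inter> X \<noteq> {} \<and> C - X \<noteq> {}"
  then obtain c' where c': "c' \<in> L" "C = mv_coset A Q c'" unfolding mv_quot_def by blast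
  obtain x' where x': "x' \<in> C" "x' \<in> X" using C by blast
  obtain y' where y': "y' \<in> C" "y' \<notin> X" using C by blast
  show "C = mv_coset A Q c"
    using U[OF P Q PQ X c'(1) c] x' y' x y c'(2) by blast
qed

lemma PSpecD: assumes "F \<in> PSpec A P" shows "up_closed A F" "kernel A F = P" "F \<subseteq> L"
proof -
  show "up_closed A F" "kernel A F = P" using assms
    unfolding PSpec_def prime_lattice_filter_def lattice_filter_def by auto
  thus "F \<subseteq> L" unfolding up_closed_def by (elim conjE)
qed

lemma ex_rep: assumes P: "prime_impl_filter A P" and Q: "impl_filter A Q" and PQ: "P \<subset> Q"
  and F: "F \<in> PSpec A P"
  shows "\<exists>c\<in>L. qQ A Q F = mv_coset A Q c \<and> (\<exists>x. x \<in> mv_coset A Q c \<and> x \<in> F)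
           \<and> (\<exists>y. y \<in> mv_coset A Q c \<and> y \<notin> F)"
proof -
  have sF: "sat P F" using sat_kernel PSpecD[OF F] by blast
  obtain q where q: "q \<in> Q" "q \<notin> P" using PQ by blast
  have qL: "q \<in> L" using q if_sub[OF Q] by blast
  have "q \<notin> kernel A F" using q PSpecD(2)[OF F] by simp
  then obtain a where a: "a \<in> L" "a \<notin> F" "imp q a \<in> F" unfolding kernel_def using qL by blast
  have "imp a (imp q a) = one" unfolding mv_imp_def using a(1) qL lcomm[of "neg a" "neg q" a] by simp
  hence i1: "imp a (imp q a) \<in> Q" using if_one[OF Q] by simp
  have i2: "imp (imp q a) a \<in> Q" unfolding imp_imp
    using if_up[OF Q q(1) sup_c[OF qL a(1)] sup_ge1[OF qL a(1)]] .
  have m: "imp q a \<in> mv_coset A Q a" unfolding coset_iff using i1 i2 a qL by simp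
  have r: "a \<in> mv_coset A Q a" using coset_refl[OF Q a(1)] .
  show ?thesis
    using qQ_eq[OF P Q _ sF a(1) m a(3) r a(2)] PQ a(1) m a(3) r a(2) by blast
qed

lemma fplus_iff: "z \<in> fplus A F \<longleftrightarrow> z \<in> L \<and> neg z \<notin> F"
  unfolding fplus_def fsub_def mv_imp_def by auto

lemma sat_fplus: assumes "sat P F" shows "sat P (fplus A F)"
  unfolding sat_def
proof (intro conjI ballI impI)
  show "fplus A F \<subseteq> L" using fplus_iff by blast
  fix z w assume z: "z \<in> fplus A F" and w: "w \<in> L" and p: "imp z w \<in> P"
  have zL: "z \<in> L" "neg z \<notin> F" using z fplus_iff by auto
  show "w \<in> fplus A F" unfolding fplus_iff
  proof (intro conjI notI)
    show "w \<in> L" by fact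
    assume nw: "neg w \<in> F"
    have "imp (neg w) (neg z) \<in> P" using neg_imp[OF zL(1) w] p by simp
    hence "neg z \<in> F" using satD[OF assms nw neg_c[OF zL(1)]] by blast
    thus False using zL by blast
  qed
qed

lemma part1: assumes P: "prime_impl_filter A P" and Q: "impl_filter A Q" and PQ: "P \<subset> Q"
  and F: "F \<in> PSpec A P"
  shows "qQ A Q (fplus A F) = quot_neg A Q (qQ A Q F)"
proof -
  have sF: "sat P F" using sat_kernel PSpecD[OF F] by blast
  obtain c x y where c: "c \<in> L" "qQ A Q F = mv_coset A Q c" and x: "x \<in> mv_coset A Q c" "x \<in> F"
    and y: "y \<in> mv_coset A Q c" "y \<notin> F"
    using ex_rep[OF P Q PQ F] by blast
  have xL: "x \<in> L" and yL: "y \<in> L" using x y coset_iff by auto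
  have "qQ A Q (fplus A F) = mv_coset A Q (neg c)"
  proof (rule qQ_eq[OF P Q _ sat_fplus[OF sF] neg_c[OF c(1)]])
    show "P \<subseteq> Q" using PQ by blast
    show "neg y \<in> mv_coset A Q (neg c)" using coset_neg_rel[OF Q y(1) c(1)] .
    show "neg y \<in> fplus A F" unfolding fplus_iff using yL y(2) by simp
    show "neg x \<in> mv_coset A Q (neg c)" using coset_neg_rel[OF Q x(1) c(1)] .
    show "neg x \<notin> fplus A F" unfolding fplus_iff using xL x(2) by simp
  qed
  thus ?thesis using quot_neg_coset[OF Q c(1)] c(2) by simp
qed

lemma fimp_iff: "z \<in> fimp A F G \<longleftrightarrow> z \<in> L \<and> (\<forall>a\<in>L - G. imp z a \<notin> F \<inter> G)"
  unfolding fimp_def fsub_def by auto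

lemma sat_int: "sat P F \<Longrightarrow> sat P G \<Longrightarrow> sat P (F \<inter> G)"
  unfolding sat_def by blast

lemma sat_fimp: assumes Pf: "impl_filter A P" and "sat P F" "sat P G" shows "sat P (fimp A F G)"
  unfolding sat_def
proof (intro conjI ballI impI)
  have H: "sat P (F \<inter> G)" using sat_int assms by blast
  show "fimp A F G \<subseteq> L" using fimp_iff by blast
  fix z w assume z: "z \<in> fimp A F G" and w: "w \<in> L" and p: "imp z w \<in> P"
  have zL: "z \<in> L" "\<forall>a\<in>L - G. imp z a \<notin> F \<inter> G" using z fimp_iff by auto
  show "w \<in> fimp A F G" unfolding fimp_iff
  proof (intro conjI ballI notI)
    show "w \<in> L" by fact
    fix a assume a: "a \<in> L - G" and h: "imp w a \<in> F \<inter> G"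
    have aL: "a \<in> L" using a by blast
    have "imp (imp w a) (imp z a) \<in> P"
      using if_up[OF Pf p imp_c[OF imp_c[OF w aL] imp_c[OF zL(1) aL]] T[OF zL(1) w aL]] .
    hence "imp z a \<in> F \<inter> G" using satD[OF H h imp_c[OF zL(1) aL]] by blast
    thus False using zL(2) a by blast
  qed
qed


lemma part2: assumes P: "prime_impl_filter A P" and Qp: "prime_impl_filter A Q" and PQ: "P \<subset> Q"
  and F: "F \<in> PSpec A P" and G: "G \<in> PSpec A P"
  shows "qQ A Q (fimp A F G) = quot_imp A Q (qQ A Q F) (qQ A Q G)"
proof -
  have Q: "impl_filter A Q" using Qp unfolding prime_impl_filter_def by (elim conjE)
  have Pf: "impl_filter A P" using P unfolding prime_impl_filter_def by (elim conjE)
  have PQ': "P \<subseteq> Q" using PQ by blast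
  have sF: "sat P F" using sat_kernel PSpecD[OF F] by blast
  have sG: "sat P G" using sat_kernel PSpecD[OF G] by blast
  have sH: "sat P (F \<inter> G)" using sat_int sF sG by blast
  have sX: "sat P (fimp A F G)" using sat_fimp[OF Pf sF sG] .
  obtain c b x where c: "c \<in> L" "qQ A Q F = mv_coset A Q c" and b: "b \<in> mv_coset A Q c" "b \<in> F"
    and x: "x \<in> mv_coset A Q c" "x \<notin> F"
    using ex_rep[OF P Q PQ F] by blast
  obtain d y a where d: "d \<in> L" "qQ A Q G = mv_coset A Q d" and y: "y \<in> mv_coset A Q d" "y \<in> G"
    and a: "a \<in> mv_coset A Q d" "a \<notin> G"
    using ex_rep[OF P Q PQ G] by blast
  have hb: "b \<in> L" "imp c b \<in> Q" "imp b c \<in> Q" using b(1) unfolding coset_iff by auto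
  have hx: "x \<in> L" "imp c x \<in> Q" "imp x c \<in> Q" using x(1) unfolding coset_iff by auto
  have hy: "y \<in> L" "imp d y \<in> Q" "imp y d \<in> Q" using y(1) unfolding coset_iff by auto
  have ha: "a \<in> L" "imp d a \<in> Q" "imp a d \<in> Q" using a(1) unfolding coset_iff by auto
  have cd: "imp c d \<in> L" using c d by simp
  have rhs: "quot_imp A Q (qQ A Q F) (qQ A Q G) = mv_coset A Q (imp c d)"
    using quot_imp_coset[OF Q c(1) d(1)] c(2) d(2) by simp
  have e2gen: "imp b' a \<notin> fimp A F G" if "b' \<in> F \<inter> G" for b'
  proof
    assume "imp b' a \<in> fimp A F G"
    hence "imp (imp b' a) a \<notin> F \<inter> G" using fimp_iff ha(1) a(2) by blast
    moreover have b'L: "b' \<in> L" using that satL[OF sH] by blast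
    have "imp (imp b' a) a \<in> F \<inter> G" unfolding imp_imp
      using sat_up[OF Pf sH that sup_c[OF b'L ha(1)] sup_ge1[OF b'L ha(1)]] .
    ultimately show False by blast
  qed
  show ?thesis
  proof (cases "imp c d \<in> Q")
    case True
    have one_in: "one \<in> mv_coset A Q (imp c d)" unfolding coset_iff using True cd if_one[OF Q] by simp
    have one_X: "one \<in> fimp A F G" unfolding fimp_iff by auto
    obtain b' where b': "b' \<in> F \<inter> G" "imp b' a \<in> Q"
    proof (cases "b \<in> G")
      case True
      have "imp b d \<in> Q" using if_trans[OF Q hb(1) c(1) d(1) hb(3) \<open>imp c d \<in> Q\<close>] .
      hence "imp b a \<in> Q" using if_trans[OF Q hb(1) d(1) ha(1) _ ha(2)] by blast
      thus ?thesis using that b(2) True by blast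
    next
      case False
      have "imp b y \<in> P" using sep[OF P sG y(2) hb(1) False] .
      hence "y \<in> F" using satD[OF sF b(2) hy(1)] by blast
      moreover have "imp y a \<in> Q" using if_trans[OF Q hy(1) d(1) ha(1) hy(3) ha(2)] .
      ultimately show ?thesis using that y(2) by blast
    qed
    have b'L: "b' \<in> L" using b'(1) satL[OF sH] by blast
    have "mv_coset A Q (imp c d) = mv_coset A Q one"
      using coset_eq[OF Q cd one_c] True if_one[OF Q] cd by simp
    hence e2: "imp b' a \<in> mv_coset A Q (imp c d)" using coset_one[OF Q] b'(2) by simp
    have "qQ A Q (fimp A F G) = mv_coset A Q (imp c d)"
      using qQ_eq[OF P Q PQ' sX cd one_in one_X e2 e2gen[OF b'(1)]] .
    thus ?thesis using rhs by simp
  next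
    case False
    have nxy: "imp x y \<notin> P"
    proof
      assume "imp x y \<in> P"
      hence "imp x y \<in> Q" using PQ' by blast
      hence "imp x d \<in> Q" using if_trans[OF Q hx(1) hy(1) d(1) _ hy(3)] by blast
      hence "imp c d \<in> Q" using if_trans[OF Q c(1) hx(1) d(1) hx(2)] by blast
      thus False using False by blast
    qed
    hence yx: "imp y x \<in> P" using prime_lin[OF P hx(1) hy(1)] by blast
    have nby: "imp b y \<notin> P"
    proof
      assume "imp b y \<in> P"
      hence "imp b y \<in> Q" using PQ' by blast
      hence "imp b d \<in> Q" using if_trans[OF Q hb(1) hy(1) d(1) _ hy(3)] by blast
      hence "imp c d \<in> Q" using if_trans[OF Q c(1) hb(1) d(1) hb(2)] by blast
      thus False using False by blast
    qed
    hence "imp y b \<in> P" using prime_lin[OF P hb(1) hy(1)] by blast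
    hence bG: "b \<in> G" using satD[OF sG y(2) hb(1)] by blast
    have e2: "imp b a \<in> mv_coset A Q (imp c d)" using coset_imp_rel[OF Q b(1) a(1) c(1) d(1)] .
    have e1: "imp x y \<in> mv_coset A Q (imp c d)" using coset_imp_rel[OF Q x(1) y(1) c(1) d(1)] .
    have xyL: "imp x y \<in> L" using hx hy by simp
    have e1X: "imp x y \<in> fimp A F G" unfolding fimp_iff
    proof (intro conjI ballI notI)
      show "imp x y \<in> L" by fact
      fix a' assume a': "a' \<in> L - G" and h: "imp (imp x y) a' \<in> F \<inter> G"
      have a'L: "a' \<in> L" using a' by blast
      have "imp a' y \<in> P" using sep[OF P sG y(2) a'L] a' by blast
      hence "imp (imp (imp x y) a') (imp (imp x y) y) \<in> P"
        using if_up[OF Pf _ imp_c[OF imp_c[OF xyL a'L] imp_c[OF xyL hy(1)]] T2[OF a'L hy(1) xyL]] by blast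
      hence "imp (imp x y) y \<in> F" using satD[OF sF _ imp_c[OF xyL hy(1)]] h by blast
      hence s1: "mv_sup A y x \<in> F" using sup_comm[OF hx(1) hy(1)] unfolding imp_imp by simp
      have yxL: "imp y x \<in> L" using hx hy by simp
      have eqs: "imp (mv_sup A y x) x = mv_sup A (imp y x) x" by (simp only: imp_imp[symmetric])
      have "imp (mv_sup A y x) x \<in> P" unfolding eqs
        using if_up[OF Pf yx sup_c[OF yxL hx(1)] sup_ge1[OF yxL hx(1)]] .
      hence "x \<in> F" using satD[OF sF s1 hx(1)] by blast
      thus False using x(2) by blast
    qed
    have "qQ A Q (fimp A F G) = mv_coset A Q (imp c d)"
      using qQ_eq[OF P Q PQ' sX cd e1 e1X e2 e2gen] b(2) bG by blast
    thus ?thesis using rhs by simp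
  qed
qed

lemma part3: assumes P: "prime_impl_filter A P" and Qp: "prime_impl_filter A Q" and PQ: "P \<subset> Q"
  and F: "F \<in> PSpec A P" and G: "G \<in> PSpec A P"
  and e: "fimp A F G = P" "fimp A G F = P"
  shows "qQ A Q F = qQ A Q G"
proof -
  have Q: "impl_filter A Q" using Qp unfolding prime_impl_filter_def by (elim conjE)
  have Pf: "impl_filter A P" using P unfolding prime_impl_filter_def by (elim conjE)
  have PQ': "P \<subseteq> Q" using PQ by blast
  have sP: "sat P P" unfolding sat_def
  proof (intro conjI ballI impI)
    show "P \<subseteq> L" using if_sub[OF Pf] .
    fix x y assume "x \<in> P" "y \<in> L" "imp x y \<in> P"
    thus "y \<in> P" using if_mp[OF Pf] if_sub[OF Pf] by blast
  qed
  obtain q where q: "q \<in> Q" "q \<notin> P" using PQ by blast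
  have q1: "q \<in> mv_coset A Q one" using coset_one[OF Q] q(1) by simp
  have qP: "qQ A Q P = mv_coset A Q one"
    using qQ_eq[OF P Q PQ' sP one_c coset_refl[OF Q one_c] if_one[OF Pf] q1 q(2)] .
  obtain c where c: "c \<in> L" "qQ A Q F = mv_coset A Q c" using ex_rep[OF P Q PQ F] by blast
  obtain d where d: "d \<in> L" "qQ A Q G = mv_coset A Q d" using ex_rep[OF P Q PQ G] by blast
  have "mv_coset A Q (imp c d) = mv_coset A Q one"
    using part2[OF P Qp PQ F G] e(1) qP c d quot_imp_coset[OF Q c(1) d(1)] by simp
  hence 1: "imp c d \<in> Q" using coset_refl[OF Q imp_c[OF c(1) d(1)]] coset_one[OF Q] by blast
  have "mv_coset A Q (imp d c) = mv_coset A Q one"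
    using part2[OF P Qp PQ G F] e(2) qP c d quot_imp_coset[OF Q d(1) c(1)] by simp
  hence 2: "imp d c \<in> Q" using coset_refl[OF Q imp_c[OF d(1) c(1)]] coset_one[OF Q] by blast
  show ?thesis using coset_eq[OF Q c(1) d(1) 1 2] c d by simp
qed

end

theorem mainTheorem19:
  assumes "mv_algebra A"
    and "prime_impl_filter A P" and "prime_impl_filter A Q" and "P \<subset> Q"
    and "F \<in> PSpec A P" and "G \<in> PSpec A P"
  shows "qQ A Q (fplus A F) = quot_neg A Q (qQ A Q F)
     \<and> qQ A Q (fimp A F G) = quot_imp A Q (qQ A Q F) (qQ A Q G)
     \<and> (pspec_equiv A P F G \<longrightarrow> qQ A Q F = qQ A Q G)"
proof -
  interpret mvalg A using assms(1) by unfold_locales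
  have Q: "impl_filter A Q" using assms(3) unfolding prime_impl_filter_def by (elim conjE)
  show ?thesis
  proof (intro conjI impI)
    show "qQ A Q (fplus A F) = quot_neg A Q (qQ A Q F)" using part1[OF assms(2) Q assms(4,5)] .
    show "qQ A Q (fimp A F G) = quot_imp A Q (qQ A Q F) (qQ A Q G)" using part2[OF assms(2,3,4,5,6)] .
    assume "pspec_equiv A P F G"
    hence "fimp A F G = P" "fimp A G F = P" unfolding pspec_equiv_def by auto
    thus "qQ A Q F = qQ A Q G" using part3[OF assms(2,3,4,5,6)] by blast
  qed
qed

end
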